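(* Let $\tilde\beta\subseteq\mathcal{N}$ satisfy, for each $c\in\mathcal{C}$, $|\tilde\beta\cap\mathcal{N}_c|=v_c+1$ if $|\mathcal{N}_c|>v_c$ and $|\tilde\beta\cap\mathcal{N}_c|=0$ otherwise. If $(B,\beta_1,\ldots,\beta_B)$ is a feasible solution of problem (RO-$\Sigma$), then for every $\sigma\in\Sigma$ at least one of the following holds: (i) there exist $b\in\{1,\ldots,B\}$ and $c\in\mathcal{C}$ with $|\{\sigma(j)\in\beta_b: j\in\mathcal{N}_c\}|>v_c$; (ii) $T^\sigma(\beta_1,\ldots,\beta_B,\tilde\beta)\neq T^*(\beta_1,\ldots,\beta_B,\tilde\beta)$.
   Context: A ballot style consists of contests $\mathcal{C}=\{1,\ldots,C\}$, candidates $\mathcal{N}=\{1,\ldots,N\}$ partitioned into nonempty sets $\mathcal{N}_c$ ($c\in\mathcal{C}$), and positive integers $v_c$. A filled-out ballot is a subset $\beta\subseteq\mathcal{N}$; $\mathscr{B}=\{\beta\subseteq\mathcal{N}: |\mathcal{N}_c\cap\beta|\le v_c\ \forall c\}$. For any deck of subsets and $i\in\mathcal{N}_c$: $T^*_i(\beta_1,\ldots,\beta_B)=\sum_{b=1}^B\mathbb{I}\{i\in\beta_b\text{ and }|\mathcal{N}_c\cap\beta_b|\le v_c\}$, and for a bijection $\sigma$ of $\mathcal{N}$, $T^\sigma_i(\beta_1,\ldots,\beta_B)=\sum_{b=1}^B\mathbb{I}\{\sigma(i)\in\beta_b\text{ and }|\{\sigma(j)\in\beta_b: j\in\mathcal{N}_c\}|\le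 v_c\}$. $\Sigma$ is the set of non-identity bijections $\mathcal{N}\to\mathcal{N}$. Problem (RO-$\Sigma$): minimize $B$ over $B\in\mathbb{N}$ and $\beta_1,\ldots,\beta_B\in\mathscr{B}$ subject to $T^\sigma(\beta_1,\ldots,\beta_B)\neq T^*(\beta_1,\ldots,\beta_B)$ for all $\sigma\in\Sigma$. *)

theory Defs
  imports Main
begin

text \<open>Candidates are 1..N, contests are 1..C; con i is the contest of candidate i,
  v c the number of votes allowed in contest c. Ballots are indexed 0..B-1 in a list.\<close>

definition cands :: "nat \<Rightarrow> (nat \<Rightarrow> nat) \<Rightarrow> nat \<Rightarrow> nat set" where
  "cands N con c = {i \<in> {1..N}. con i = c}"

definition ballot_style :: "nat \<Rightarrow> nat \<Rightarrow> (nat \<Rightarrow> nat) \<Rightarrow> (nat \<Rightarrow> nat) \<Rightarrow> bool" where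
  "ballot_style C N con v \<longleftrightarrow> (\<forall>i\<in>{1..N}. con i \<in> {1..C})
     \<and> (\<forall>c\<in>{1..C}. cands N con c \<noteq> {} \<and> v c > 0)"

definition valid_ballots :: "nat \<Rightarrow> nat \<Rightarrow> (nat \<Rightarrow> nat) \<Rightarrow> (nat \<Rightarrow> nat) \<Rightarrow> nat set set" where
  "valid_ballots C N con v = {\<beta>. \<beta> \<subseteq> {1..N} \<and> (\<forall>c\<in>{1..C}. card (cands N con c \<inter> \<beta>) \<le> v c)}"

definition Tstar :: "nat \<Rightarrow> (nat \<Rightarrow> nat) \<Rightarrow> (nat \<Rightarrow> nat) \<Rightarrow> nat set list \<Rightarrow> nat \<Rightarrow> nat" where
  "Tstar N con v \<beta>s i = card {b. b < length \<beta>s \<and> i \<in> \<beta>s ! b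
      \<and> card (cands N con (con i) \<inter> \<beta>s ! b) \<le> v (con i)}"

definition Tsig :: "nat \<Rightarrow> (nat \<Rightarrow> nat) \<Rightarrow> (nat \<Rightarrow> nat) \<Rightarrow> (nat \<Rightarrow> nat) \<Rightarrow> nat set list \<Rightarrow> nat \<Rightarrow> nat" where
  "Tsig N con v \<sigma> \<beta>s i = card {b. b < length \<beta>s \<and> \<sigma> i \<in> \<beta>s ! b
      \<and> card {\<sigma> j | j. j \<in> cands N con (con i) \<and> \<sigma> j \<in> \<beta>s ! b} \<le> v (con i)}"

definition tallies_differ :: "nat \<Rightarrow> (nat \<Rightarrow> nat) \<Rightarrow> (nat \<Rightarrow> nat) \<Rightarrow> (nat \<Rightarrow> nat) \<Rightarrow> nat set list \<Rightarrow> bool" where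
  "tallies_differ N con v \<sigma> \<beta>s \<longleftrightarrow> (\<exists>i\<in>{1..N}. Tsig N con v \<sigma> \<beta>s i \<noteq> Tstar N con v \<beta>s i)"

definition Sigma_perms :: "nat \<Rightarrow> (nat \<Rightarrow> nat) set" where
  "Sigma_perms N = {\<sigma>. bij_betw \<sigma> {1..N} {1..N} \<and> (\<exists>i\<in>{1..N}. \<sigma> i \<noteq> i)}"

text \<open>Feasibility for (RO-Sigma): B = length of the list.\<close>
definition RO_feasible :: "nat \<Rightarrow> nat \<Rightarrow> (nat \<Rightarrow> nat) \<Rightarrow> (nat \<Rightarrow> nat) \<Rightarrow> nat set list \<Rightarrow> bool" where
  "RO_feasible C N con v \<beta>s \<longleftrightarrow> set \<beta>s \<subseteq> valid_ballots C N con v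
     \<and> (\<forall>\<sigma>\<in>Sigma_perms N. tallies_differ N con v \<sigma> \<beta>s)"

end

theory Submission
  imports Defs
begin

lemma card_snoc:
  "card {b. b < length (xs@[y]) \<and> P ((xs@[y])!b)} = card {b. b < length xs \<and> P (xs!b)} + (if P y then 1 else 0)"
proof -
  have "{b. b < length (xs@[y]) \<and> P ((xs@[y])!b)} = {b. b < length xs \<and> P (xs!b)} \<union> (if P y then {length xs} else {})"
    by (auto simp: nth_append less_Suc_eq)
  moreover have "finite {b. b < length xs \<and> P (xs!b)}" by simp
  ultimately show ?thesis by (auto simp: card_insert_if)
qed

theorem proposition8:
  fixes C N :: nat and con v :: "nat \<Rightarrow> nat" and \<beta>s :: "nat set list" and \<beta>t :: "nat set"
  assumes style: "ballot_style C N con v"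
    and bt_sub: "\<beta>t \<subseteq> {1..N}"
    and bt_card: "\<forall>c\<in>{1..C}. card (\<beta>t \<inter> cands N con c) =
                     (if card (cands N con c) > v c then v c + 1 else 0)"
    and feas: "RO_feasible C N con v \<beta>s"
  shows "\<forall>\<sigma>\<in>Sigma_perms N.
           (\<exists>b < length \<beta>s. \<exists>c\<in>{1..C}. card {\<sigma> j | j. j \<in> cands N con c \<and> \<sigma> j \<in> \<beta>s ! b} > v c)
         \<or> tallies_differ N con v \<sigma> (\<beta>s @ [\<beta>t])"
proof
  fix \<sigma> assume sig: "\<sigma> \<in> Sigma_perms N"
  have bij: "bij_betw \<sigma> {1..N} {1..N}" using sig by (simp add: Sigma_perms_def)
  have diff: "tallies_differ N con v \<sigma> \<beta>s" using feas sig by (simp add: RO_feasible_def)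
  have valid: "\<And>b. b < length \<beta>s \<Longrightarrow> \<beta>s ! b \<in> valid_ballots C N con v"
    using feas by (auto simp: RO_feasible_def)
  have conC: "\<And>i. i \<in> {1..N} \<Longrightarrow> con i \<in> {1..C}" using style by (simp add: ballot_style_def)
  define g where "g j = card {b. b < length \<beta>s \<and> j \<in> \<beta>s ! b}" for j
  show "(\<exists>b < length \<beta>s. \<exists>c\<in>{1..C}. card {\<sigma> j | j. j \<in> cands N con c \<and> \<sigma> j \<in> \<beta>s ! b} > v c)
         \<or> tallies_differ N con v \<sigma> (\<beta>s @ [\<beta>t])"
  proof (rule disjCI)
    assume "\<not> tallies_differ N con v \<sigma> (\<beta>s @ [\<beta>t])"
    hence eq: "\<And>i. i \<in> {1..N} \<Longrightarrow> Tsig N con v \<sigma> (\<beta>s @ [\<beta>t]) i = Tstar N con v (\<beta>s @ [\<beta>t]) i"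
      by (simp add: tallies_differ_def)
    show "\<exists>b < length \<beta>s. \<exists>c\<in>{1..C}. card {\<sigma> j | j. j \<in> cands N con c \<and> \<sigma> j \<in> \<beta>s ! b} > v c"
    proof (rule ccontr)
      assume "\<not> ?thesis"
      hence ni: "\<And>b c. b < length \<beta>s \<Longrightarrow> c \<in> {1..C} \<Longrightarrow> card {\<sigma> j | j. j \<in> cands N con c \<and> \<sigma> j \<in> \<beta>s ! b} \<le> v c"
        by (meson not_le)
      have A: "Tstar N con v (\<beta>s @ [\<beta>t]) i = g i" if i: "i \<in> {1..N}" for i
      proof -
        have c: "con i \<in> {1..C}" using conC i .
        have fin: "finite (\<beta>t \<inter> cands N con (con i))" unfolding cands_def by auto
        have nt: "\<not> (i \<in> \<beta>t \<and> card (cands N con (con i) \<inter> \<beta>t) \<le> v (con i))"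
        proof
          assume h: "i \<in> \<beta>t \<and> card (cands N con (con i) \<inter> \<beta>t) \<le> v (con i)"
          hence "i \<in> \<beta>t \<inter> cands N con (con i)" using i by (simp add: cands_def)
          hence "card (\<beta>t \<inter> cands N con (con i)) > 0" using fin card_gt_0_iff by blast
          moreover have "cands N con (con i) \<inter> \<beta>t = \<beta>t \<inter> cands N con (con i)" by blast
          ultimately show False using h bt_card c by (auto split: if_splits)
        qed
        have "Tstar N con v \<beta>s i = g i"
          unfolding Tstar_def g_def
        proof (rule arg_cong[where f=card], rule Collect_cong)
          fix b show "(b < length \<beta>s \<and> i \<in> \<beta>s ! b \<and> card (cands N con (con i) \<inter> \<beta>s ! b) \<le> v (con i))
             = (b < length \<beta>s \<and> i \<in> \<beta>s ! b)"
            using valid c by (auto simp: valid_ballots_def)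
        qed
        thus ?thesis using nt unfolding Tstar_def using card_snoc[where P="\<lambda>X. i \<in> X \<and> card (cands N con (con i) \<inter> X) \<le> v (con i)"] by simp
      qed
      have B: "Tsig N con v \<sigma> \<beta>s i = g (\<sigma> i)" if i: "i \<in> {1..N}" for i
        unfolding Tsig_def g_def
      proof (rule arg_cong[where f=card], rule Collect_cong)
        fix b show "(b < length \<beta>s \<and> \<sigma> i \<in> \<beta>s ! b \<and> card {\<sigma> j | j. j \<in> cands N con (con i) \<and> \<sigma> j \<in> \<beta>s ! b} \<le> v (con i))
             = (b < length \<beta>s \<and> \<sigma> i \<in> \<beta>s ! b)"
          using ni conC[OF i] by auto
      qed
      have Cm: "Tsig N con v \<sigma> \<beta>s i \<le> Tsig N con v \<sigma> (\<beta>s @ [\<beta>t]) i" for i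
        unfolding Tsig_def using card_snoc[where P="\<lambda>X. \<sigma> i \<in> X \<and> card {\<sigma> j | j. j \<in> cands N con (con i) \<and> \<sigma> j \<in> X} \<le> v (con i)"] by simp
      have le: "g (\<sigma> i) \<le> g i" if "i \<in> {1..N}" for i
        using A[OF that] B[OF that] Cm[of i] eq[OF that] by simp
      have sums: "(\<Sum>i\<in>{1..N}. g (\<sigma> i)) = (\<Sum>i\<in>{1..N}. g i)"
        using sum.reindex_bij_betw[OF bij, of g] by simp
      have alleq: "g (\<sigma> i) = g i" if i: "i \<in> {1..N}" for i
      proof (rule ccontr)
        assume "g (\<sigma> i) \<noteq> g i"
        hence "g (\<sigma> i) < g i" using le[OF i] by simp
        hence "(\<Sum>i\<in>{1..N}. g (\<sigma> i)) < (\<Sum>i\<in>{1..N}. g i)"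
          using le i by (intro sum_strict_mono_ex1) auto
        thus False using sums by simp
      qed
      have "\<forall>i\<in>{1..N}. Tsig N con v \<sigma> \<beta>s i = Tstar N con v \<beta>s i"
      proof
        fix i assume i: "i \<in> {1..N}"
        have c: "con i \<in> {1..C}" using conC i .
        have "Tstar N con v \<beta>s i = g i"
          unfolding Tstar_def g_def
        proof (rule arg_cong[where f=card], rule Collect_cong)
          fix b show "(b < length \<beta>s \<and> i \<in> \<beta>s ! b \<and> card (cands N con (con i) \<inter> \<beta>s ! b) \<le> v (con i))
             = (b < length \<beta>s \<and> i \<in> \<beta>s ! b)"
            using valid c by (auto simp: valid_ballots_def)
        qed
        thus "Tsig N con v \<sigma> \<beta>s i = Tstar N con v \<beta>s i" using B[OF i] alleq[OF i] by simp
      qed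
      thus False using diff by (simp add: tallies_differ_def)
    qed
  qed
qed

end
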